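(* Let $\underline\lambda=(\lambda^1,1^m)$ be a bipartition of $n$ whose second component is a single column, so that $M^{\underline\lambda}$ is an $\mathcal R_n$-module. For every standard bitableau $U=(U^1,U^2)$ of shape $\underline\lambda$ and every $1\le i\le n$, $$L_iv_U=\epsilon_i\,\mathbf q^{c_U(i)}v_U,\qquad \epsilon_i=\begin{cases}1& i\in U^1\\ 0& i\in U^2.\end{cases}$$
   Context: $\mathbf q$ is an indeterminate. $\mathcal R_n$ is the generic mirabolic Hecke algebra over $\mathbb C(\mathbf q)$, identified with $\mathcal H_n(1,0)/I_n^{(\emptyset,2)}$, where $\mathcal H_n(1,0)$ has generators $X,T_1,\dots,T_{n-1}$ (Hecke relations, $XT_i=T_iX$ for $i\ge2$, $XT_1XT_1=T_1XT_1X$, $X^2=X$), $I_n^{(\emptyset,2)}$ is generated by $1-X+T_1-XT_1-T_1X+XT_1X-T_1XT_1+XT_1XT_1$, and $e\in\mathcal R_n$ is the image of $X$. The Jucys–Murphy elements of $\mathcal R_n$ are $L_i=\mathbf q^{1-i}T_{i-1}\cdots T_1eT_1\cdots T_{i-1}$, $i=1,\dots,n$. Standard bitableaux, contents $c_U(i)=(j-1)+(\text{column}-\text{row of } i \text{ in } U^j)$ for $i\in U^j$, and the modules $M^{\underline\lambda}$ with basis $\{v_U\}$ are as in Ariki–Koike: $Xv_U=v_U$ if $1\in U^1$, $0$ if $1\in U^2$; $T_iv_U=\mathbf q v_U$ (same row, same tableau), $-v_U$ (same column, same tableau), $\frac{\mathbf q-1}{1-\mathbf q^{d}}v_U+(1+\frac{\mathbf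 q-1}{1-\mathbf q^{d}})v_{s_i(U)}$ with $d=c_U(i)-c_U(i+1)$ (same tableau otherwise), $v_{s_i(U)}$ ($i\in U^1,i+1\in U^2$), $(\mathbf q-1)v_U+\mathbf q v_{s_i(U)}$ ($i\in U^2,i+1\in U^1$). *)

theory Defs
  imports "HOL-Computational_Algebra.Polynomial" "HOL-Computational_Algebra.Fraction_Field"
begin

(* Ground field C(q): rational functions in the indeterminate q over the complex numbers. *)
type_synonym K = "complex poly fract"

definition qq :: K where "qq = Fract [:0, 1:] 1"

(* A bitableau U is recorded as the map sending an entry k in {1..n} to the cell it occupies:
   (j, r, c) = (component j in {1,2}, row r, column c), rows/columns 0-indexed.
   Outside {1..n} the map is normalised to (0,0,0) so that tableaux are unique. *)
type_synonym bitab = "nat \<Rightarrow> nat \<times> nat \<times> nat"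

definition is_partition :: "nat list \<Rightarrow> bool" where
  "is_partition l \<longleftrightarrow> sorted_wrt (\<ge>) l \<and> (\<forall>x\<in>set l. 0 < x)"

definition bicells :: "nat list \<Rightarrow> nat \<Rightarrow> (nat \<times> nat \<times> nat) set" where
  "bicells lam1 m = {(1, r, c) | r c. r < length lam1 \<and> c < lam1 ! r} \<union> {(2, r, 0) | r. r < m}"

definition comp :: "bitab \<Rightarrow> nat \<Rightarrow> nat" where "comp U k = fst (U k)"
definition row :: "bitab \<Rightarrow> nat \<Rightarrow> nat" where "row U k = fst (snd (U k))"
definition col :: "bitab \<Rightarrow> nat \<Rightarrow> nat" where "col U k = snd (snd (U k))"

definition std_bitab :: "nat \<Rightarrow> nat list \<Rightarrow> nat \<Rightarrow> bitab set" where
  "std_bitab n lam1 m = {U. bij_betw U {1..n} (bicells lam1 m)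
     \<and> (\<forall>k. k \<notin> {1..n} \<longrightarrow> U k = (0, 0, 0))
     \<and> (\<forall>a\<in>{1..n}. \<forall>b\<in>{1..n}. comp U a = comp U b \<and> row U a = row U b \<and> col U a < col U b \<longrightarrow> a < b)
     \<and> (\<forall>a\<in>{1..n}. \<forall>b\<in>{1..n}. comp U a = comp U b \<and> col U a = col U b \<and> row U a < row U b \<longrightarrow> a < b)}"

definition tab_content :: "bitab \<Rightarrow> nat \<Rightarrow> int" where
  "tab_content U k = (int (comp U k) - 1) + (int (col U k) - int (row U k))"

definition swapU :: "nat \<Rightarrow> bitab \<Rightarrow> bitab" where
  "swapU i U = (\<lambda>k. if k = i then U (Suc i) else if k = Suc i then U i else U k)"

(* vectors of M^lambda are coefficient functions on bitableaux; v_U is the basis vector *)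
definition vb :: "bitab \<Rightarrow> bitab \<Rightarrow> K" where
  "vb U = (\<lambda>W. if W = U then 1 else 0)"

definition Tb :: "nat \<Rightarrow> bitab \<Rightarrow> bitab \<Rightarrow> K" where
  "Tb i U =
    (if comp U i = 1 \<and> comp U (Suc i) = 2 then vb (swapU i U)
     else if comp U i = 2 \<and> comp U (Suc i) = 1 then (\<lambda>W. (qq - 1) * vb U W + qq * vb (swapU i U) W)
     else if row U i = row U (Suc i) then (\<lambda>W. qq * vb U W)
     else if col U i = col U (Suc i) then (\<lambda>W. - vb U W)
     else (let a = (qq - 1) / (1 - qq powi (tab_content U i - tab_content U (Suc i)))
           in (\<lambda>W. a * vb U W + (1 + a) * vb (swapU i U) W)))"

definition Xb :: "bitab \<Rightarrow> bitab \<Rightarrow> K" where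
  "Xb U = (if comp U 1 = 1 then vb U else (\<lambda>_. 0))"

definition lin :: "bitab set \<Rightarrow> (bitab \<Rightarrow> bitab \<Rightarrow> K) \<Rightarrow> (bitab \<Rightarrow> K) \<Rightarrow> (bitab \<Rightarrow> K)" where
  "lin S f v = (\<lambda>W. \<Sum>U\<in>S. v U * f U W)"

(* action of the Jucys--Murphy element L_i = q^(1-i) T_{i-1}...T_1 e T_1...T_{i-1} on M^lambda *)
definition Lop :: "nat \<Rightarrow> nat list \<Rightarrow> nat \<Rightarrow> nat \<Rightarrow> (bitab \<Rightarrow> K) \<Rightarrow> (bitab \<Rightarrow> K)" where
  "Lop n lam1 m i v =
    (let S = std_bitab n lam1 m;
         ops = map (\<lambda>j. lin S (Tb j)) (rev [1..<i]) @ [lin S Xb] @ map (\<lambda>j. lin S (Tb j)) [1..<i]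
     in (\<lambda>W. qq powi (1 - int i) * foldr (\<lambda>g w. g w) ops v W))"

definition eps :: "bitab \<Rightarrow> nat \<Rightarrow> K" where
  "eps U k = (if comp U k = 1 then 1 else 0)"

end

theory Submission
  imports Defs
begin

lemma qq_pow: "qq ^ k = Fract ([:0, 1:] ^ k) 1"
  by (induct k) (simp_all add: qq_def One_fract_def)

lemma qq_nz: "qq \<noteq> 0"
  by (simp add: qq_def Zero_fract_def eq_fract)

lemma qq_pow_ne1: "k > 0 \<Longrightarrow> qq ^ k \<noteq> 1"
proof
  assume k: "k > 0" and h: "qq ^ k = 1"
  hence "([:0, 1:] :: complex poly) ^ k = 1"
    by (simp add: qq_pow One_fract_def eq_fract)
  hence "degree (([:0, 1:] :: complex poly) ^ k) = 0" by simp
  moreover have "degree (([:0, 1:] :: complex poly) ^ k) = k"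
    by (simp add: degree_power_eq)
  ultimately show False using k by simp
qed

lemma qq_powi_ne1: "d \<noteq> 0 \<Longrightarrow> qq powi d \<noteq> 1"
proof (cases "d \<ge> 0")
  case True
  assume "d \<noteq> 0"
  hence "nat d > 0" using True by simp
  thus ?thesis using True qq_pow_ne1 by (simp add: power_int_def)
next
  case False
  hence "nat (-d) > 0" by simp
  thus ?thesis using False qq_pow_ne1 qq_nz by (simp add: power_int_def power_inverse)
qed

definition opsL :: "bitab set \<Rightarrow> nat \<Rightarrow> ((bitab \<Rightarrow> K) \<Rightarrow> (bitab \<Rightarrow> K)) list" where
  "opsL S i = map (\<lambda>j. lin S (Tb j)) (rev [1..<i]) @ [lin S Xb] @ map (\<lambda>j. lin S (Tb j)) [1..<i]"

definition FF :: "bitab set \<Rightarrow> nat \<Rightarrow> (bitab \<Rightarrow> K) \<Rightarrow> (bitab \<Rightarrow> K)" where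
  "FF S i v = foldr (\<lambda>g w. g w) (opsL S i) v"

lemma Lop_eq: "Lop n lam1 m i v = (\<lambda>W. qq powi (1 - int i) * FF (std_bitab n lam1 m) i v W)"
  by (simp add: Lop_def FF_def opsL_def Let_def)

lemma FF_Suc: "1 \<le> i \<Longrightarrow> FF S (Suc i) v = lin S (Tb i) (FF S i (lin S (Tb i) v))"
  by (simp add: FF_def opsL_def)

lemma FF_1: "FF S 1 v = lin S Xb v"
  by (simp add: FF_def opsL_def)

lemma lin_vb: "finite S \<Longrightarrow> U \<in> S \<Longrightarrow> lin S f (vb U) = f U"
proof -
  assume "finite S" "U \<in> S"
  have "\<And>W. (\<Sum>Ua\<in>S. vb U Ua * f Ua W) = (\<Sum>Ua\<in>S. if Ua = U then f U W else 0)"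
    by (rule sum.cong) (auto simp: vb_def)
  thus ?thesis using \<open>finite S\<close> \<open>U \<in> S\<close> unfolding lin_def by (intro ext) simp
qed

lemma lin_lin: "lin S f (\<lambda>W. a * x W + b * y W) = (\<lambda>W. a * lin S f x W + b * lin S f y W)"
  by (simp add: lin_def fun_eq_iff algebra_simps sum.distrib sum_distrib_left)

lemma foldr_lin:
  assumes "\<forall>g\<in>set gs. \<exists>f. g = lin S f"
  shows "foldr (\<lambda>g w. g w) gs (\<lambda>W. a * x W + b * y W)
       = (\<lambda>W. a * foldr (\<lambda>g w. g w) gs x W + b * foldr (\<lambda>g w. g w) gs y W)"
  using assms by (induct gs) (auto simp: lin_lin)

lemma FF_lin: "FF S i (\<lambda>W. a * x W + b * y W) = (\<lambda>W. a * FF S i x W + b * FF S i y W)"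
  unfolding FF_def by (rule foldr_lin) (auto simp: opsL_def)

lemma step_gen:
  assumes fin: "finite S" and US: "U \<in> S" and VS: "V \<in> S"
    and T1: "Tb i U = (\<lambda>W. c1 * vb U W + c2 * vb V W)"
    and T2: "Tb i V = (\<lambda>W. d1 * vb V W + d2 * vb U W)"
    and F1: "FF S i (vb U) = (\<lambda>W. eU * vb U W)"
    and F2: "FF S i (vb V) = (\<lambda>W. eV * vb V W)"
  shows "lin S (Tb i) (FF S i (lin S (Tb i) (vb U)))
     = (\<lambda>W. (c1*eU*c1 + c2*eV*d2) * vb U W + (c1*eU*c2 + c2*eV*d1) * vb V W)"
proof -
  have "FF S i (lin S (Tb i) (vb U)) = (\<lambda>W. (c1 * eU) * vb U W + (c2 * eV) * vb V W)"
    using fin US by (simp add: lin_vb T1 FF_lin F1 F2 algebra_simps)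
  hence "lin S (Tb i) (FF S i (lin S (Tb i) (vb U)))
      = (\<lambda>W. (c1 * eU) * Tb i U W + (c2 * eV) * Tb i V W)"
    using fin US VS by (simp add: lin_lin lin_vb)
  also have "\<dots> = (\<lambda>W. (c1*eU*c1 + c2*eV*d2) * vb U W + (c1*eU*c2 + c2*eV*d1) * vb V W)"
    by (simp add: T1 T2 fun_eq_iff algebra_simps)
  finally show ?thesis .
qed

lemma U_eq: "U k = (comp U k, row U k, col U k)"
  by (simp add: comp_def row_def col_def)

lemma bicells_iff: "x \<in> bicells lam1 m \<longleftrightarrow>
   (fst x = 1 \<and> fst (snd x) < length lam1 \<and> snd (snd x) < lam1 ! fst (snd x)) \<or>
   (fst x = 2 \<and> fst (snd x) < m \<and> snd (snd x) = 0)"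
  by (cases x) (auto simp: bicells_def)

lemma std_cell:
  assumes "U \<in> std_bitab n lam1 m" "k \<in> {1..n}"
  shows "(comp U k = 1 \<and> row U k < length lam1 \<and> col U k < lam1 ! row U k) \<or>
         (comp U k = 2 \<and> row U k < m \<and> col U k = 0)"
proof -
  have "bij_betw U {1..n} (bicells lam1 m)" using assms(1) unfolding std_bitab_def by simp
  hence "U k \<in> bicells lam1 m" using assms(2) by (rule bij_betw_apply)
  thus ?thesis by (simp add: bicells_iff comp_def row_def col_def)
qed

lemma std_surj:
  assumes "U \<in> std_bitab n lam1 m" "(j, r, c) \<in> bicells lam1 m"
  shows "\<exists>k\<in>{1..n}. comp U k = j \<and> row U k = r \<and> col U k = c"
proof -
  have "U ` {1..n} = bicells lam1 m" using assms(1) unfolding std_bitab_def bij_betw_def by simp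
  then obtain k where "k \<in> {1..n}" "U k = (j, r, c)" using assms(2) by (metis imageE)
  thus ?thesis by (intro bexI[of _ k]) (auto simp: comp_def row_def col_def)
qed

lemma std_inj:
  assumes "U \<in> std_bitab n lam1 m" "a \<in> {1..n}" "b \<in> {1..n}"
    "comp U a = comp U b" "row U a = row U b" "col U a = col U b"
  shows "a = b"
proof -
  have "inj_on U {1..n}" using assms(1) unfolding std_bitab_def bij_betw_def by simp
  moreover have "U a = U b"
  proof -
    have "U a = (comp U a, row U a, col U a)" by (rule U_eq)
    also have "\<dots> = (comp U b, row U b, col U b)" using assms(4-6) by simp
    also have "\<dots> = U b" by (rule U_eq[symmetric])
    finally show ?thesis .
  qed
  ultimately show ?thesis using assms(2,3) by (rule inj_onD)
qed

lemma std_rowlt: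
  assumes "U \<in> std_bitab n lam1 m" "a \<in> {1..n}" "b \<in> {1..n}"
    "comp U a = comp U b" "row U a = row U b" "col U a < col U b"
  shows "a < b"
proof -
  have "\<forall>a\<in>{1..n}. \<forall>b\<in>{1..n}. comp U a = comp U b \<and> row U a = row U b \<and> col U a < col U b \<longrightarrow> a < b"
    using assms(1) unfolding std_bitab_def mem_Collect_eq by (elim conjE)
  thus ?thesis using assms(2-6) by blast
qed

lemma std_collt:
  assumes "U \<in> std_bitab n lam1 m" "a \<in> {1..n}" "b \<in> {1..n}"
    "comp U a = comp U b" "col U a = col U b" "row U a < row U b"
  shows "a < b"
proof -
  have "\<forall>a\<in>{1..n}. \<forall>b\<in>{1..n}. comp U a = comp U b \<and> col U a = col U b \<and> row U a < row U b \<longrightarrow> a < b"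
    using assms(1) unfolding std_bitab_def mem_Collect_eq by (elim conjE)
  thus ?thesis using assms(2-6) by blast
qed

lemma same_row_content:
  assumes U: "U \<in> std_bitab n lam1 m" and i: "1 \<le> i" "Suc i \<le> n"
    and c: "comp U i = comp U (Suc i)" and r: "row U i = row U (Suc i)"
  shows "comp U i = 1 \<and> tab_content U (Suc i) = tab_content U i + 1"
proof -
  have ii: "i \<in> {1..n}" "Suc i \<in> {1..n}" using i by auto
  have ne: "col U i \<noteq> col U (Suc i)" using std_inj[OF U ii c r] by auto
  have "\<not> col U (Suc i) < col U i" using std_rowlt[OF U ii(2) ii(1)] c r by fastforce
  hence lt: "col U i < col U (Suc i)" using ne by simp
  have c1: "comp U i = 1" using std_cell[OF U ii(1)] std_cell[OF U ii(2)] c lt by auto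
  have "col U (Suc i) = Suc (col U i)"
  proof (rule ccontr)
    assume "col U (Suc i) \<noteq> Suc (col U i)"
    hence lt2: "Suc (col U i) < col U (Suc i)" using lt by simp
    have "(1, row U i, Suc (col U i)) \<in> bicells lam1 m"
      using std_cell[OF U ii(2)] c c1 r lt2 by (auto simp: bicells_iff)
    then obtain k where k: "k \<in> {1..n}" "comp U k = 1" "row U k = row U i" "col U k = Suc (col U i)"
      using std_surj[OF U] by blast
    have "i < k" using std_rowlt[OF U ii(1) k(1)] k c1 by simp
    moreover have "k < Suc i" using std_rowlt[OF U k(1) ii(2)] k c1 c r lt2 by simp
    ultimately show False by simp
  qed
  thus ?thesis using c1 c r by (simp add: tab_content_def)
qed

lemma same_col_content:
  assumes P: "is_partition lam1" and U: "U \<in> std_bitab n lam1 m" and i: "1 \<le> i" "Suc i \<le> n"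
    and c: "comp U i = 1" "comp U (Suc i) = 1" and r: "col U i = col U (Suc i)"
  shows "tab_content U (Suc i) = tab_content U i - 1"
proof -
  have ii: "i \<in> {1..n}" "Suc i \<in> {1..n}" using i by auto
  have ne: "row U i \<noteq> row U (Suc i)" using std_inj[OF U ii _ _ r] c by auto
  have "\<not> row U (Suc i) < row U i" using std_collt[OF U ii(2) ii(1)] c r by fastforce
  hence lt: "row U i < row U (Suc i)" using ne by simp
  have "row U (Suc i) = Suc (row U i)"
  proof (rule ccontr)
    assume "row U (Suc i) \<noteq> Suc (row U i)"
    hence lt2: "Suc (row U i) < row U (Suc i)" using lt by simp
    have cl: "row U (Suc i) < length lam1" "col U (Suc i) < lam1 ! row U (Suc i)"
      using std_cell[OF U ii(2)] c by auto
    have "lam1 ! row U (Suc i) \<le> lam1 ! Suc (row U i)"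
      using P lt2 cl(1) unfolding is_partition_def by (auto dest: sorted_wrt_nth_less)
    hence "(1, Suc (row U i), col U i) \<in> bicells lam1 m"
      using cl lt2 r by (auto simp: bicells_iff)
    then obtain k where k: "k \<in> {1..n}" "comp U k = 1" "row U k = Suc (row U i)" "col U k = col U i"
      using std_surj[OF U] by blast
    have "i < k" using std_collt[OF U ii(1) k(1)] k c by simp
    moreover have "k < Suc i" using std_collt[OF U k(1) ii(2)] k c r lt2 by simp
    ultimately show False by simp
  qed
  thus ?thesis using c r by (simp add: tab_content_def)
qed

lemma diag_content:
  assumes U: "U \<in> std_bitab n lam1 m" and i: "1 \<le> i" "Suc i \<le> n"
    and c: "comp U i = 1" "comp U (Suc i) = 1" and r: "row U i \<noteq> row U (Suc i)"
    and cc: "col U i \<noteq> col U (Suc i)"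
  shows "tab_content U i \<noteq> tab_content U (Suc i)"
proof
  assume eq: "tab_content U i = tab_content U (Suc i)"
  have ii: "i \<in> {1..n}" "Suc i \<in> {1..n}" using i by auto
  have cl1: "row U i < length lam1" "col U i < lam1 ! row U i" using std_cell[OF U ii(1)] c by auto
  have cl2: "row U (Suc i) < length lam1" "col U (Suc i) < lam1 ! row U (Suc i)" using std_cell[OF U ii(2)] c by auto
  show False
  proof (cases "row U i < row U (Suc i)")
    case True
    hence lt: "col U i < col U (Suc i)" using eq c by (simp add: tab_content_def)
    have "(1, row U (Suc i), col U i) \<in> bicells lam1 m" using cl2 lt by (auto simp: bicells_iff)
    then obtain k where k: "k \<in> {1..n}" "comp U k = 1" "row U k = row U (Suc i)" "col U k = col U i"
      using std_surj[OF U] by blast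
    have "i < k" using std_collt[OF U ii(1) k(1)] k c True by simp
    moreover have "k < Suc i" using std_rowlt[OF U k(1) ii(2)] k c lt by simp
    ultimately show False by simp
  next
    case False
    hence gt: "row U (Suc i) < row U i" using r by simp
    hence lt: "col U (Suc i) < col U i" using eq c by (simp add: tab_content_def)
    have "(1, row U i, col U (Suc i)) \<in> bicells lam1 m" using cl1 lt by (auto simp: bicells_iff)
    then obtain k where k: "k \<in> {1..n}" "comp U k = 1" "row U k = row U i" "col U k = col U (Suc i)"
      using std_surj[OF U] by blast
    have "k < i" using std_rowlt[OF U k(1) ii(1)] k c lt by simp
    moreover have "Suc i < k" using std_collt[OF U ii(2) k(1)] k c gt by simp
    ultimately show False by simp
  qed
qed

lemma first_content:
  assumes P: "is_partition lam1" and U: "U \<in> std_bitab n lam1 m" and n: "1 \<le> n"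
    and c: "comp U 1 = 1"
  shows "tab_content U 1 = 0"
proof -
  have i1: "1 \<in> {1..n}" using n by auto
  have cl: "row U 1 < length lam1" "col U 1 < lam1 ! row U 1" using std_cell[OF U i1] c by auto
  have col0: "col U 1 = 0"
  proof (rule ccontr)
    assume "col U 1 \<noteq> 0"
    hence "(1, row U 1, 0) \<in> bicells lam1 m" using cl by (auto simp: bicells_iff)
    then obtain k where k: "k \<in> {1..n}" "comp U k = 1" "row U k = row U 1" "col U k = 0"
      using std_surj[OF U] by blast
    have "k < 1" using std_rowlt[OF U k(1) i1] k c \<open>col U 1 \<noteq> 0\<close> by simp
    thus False using k(1) by simp
  qed
  have row0: "row U 1 = 0"
  proof (rule ccontr)
    assume h: "row U 1 \<noteq> 0"
    have "lam1 ! row U 1 \<le> lam1 ! 0"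
      using P h cl(1) unfolding is_partition_def by (auto dest: sorted_wrt_nth_less)
    hence "(1, 0, 0) \<in> bicells lam1 m" using cl by (auto simp: bicells_iff)
    then obtain k where k: "k \<in> {1..n}" "comp U k = 1" "row U k = 0" "col U k = 0"
      using std_surj[OF U] by blast
    have "k < 1" using std_collt[OF U k(1) i1] k c col0 h by simp
    thus False using k(1) by simp
  qed
  show ?thesis using c col0 row0 by (simp add: tab_content_def)
qed


lemma swap_facts:
  "comp (swapU i U) i = comp U (Suc i)" "comp (swapU i U) (Suc i) = comp U i"
  "row (swapU i U) i = row U (Suc i)" "row (swapU i U) (Suc i) = row U i"
  "col (swapU i U) i = col U (Suc i)" "col (swapU i U) (Suc i) = col U i"
  "tab_content (swapU i U) i = tab_content U (Suc i)"
  "tab_content (swapU i U) (Suc i) = tab_content U i"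
  "eps (swapU i U) i = eps U (Suc i)"
  "swapU i (swapU i U) = U"
  by (simp_all add: swapU_def comp_def row_def col_def tab_content_def eps_def fun_eq_iff)

lemma Tb_12: "comp U i = 1 \<Longrightarrow> comp U (Suc i) = 2 \<Longrightarrow>
    Tb i U = (\<lambda>W. 0 * vb U W + 1 * vb (swapU i U) W)"
  by (auto simp: Tb_def)

lemma Tb_21: "comp U i = 2 \<Longrightarrow> comp U (Suc i) = 1 \<Longrightarrow>
    Tb i U = (\<lambda>W. (qq - 1) * vb U W + qq * vb (swapU i U) W)"
  by (auto simp: Tb_def)

lemma Tb_row: "comp U i = comp U (Suc i) \<Longrightarrow> row U i = row U (Suc i) \<Longrightarrow>
    Tb i U = (\<lambda>W. qq * vb U W + 0 * vb U W)"
  by (auto simp: Tb_def)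

lemma Tb_col: "comp U i = comp U (Suc i) \<Longrightarrow> row U i \<noteq> row U (Suc i) \<Longrightarrow> col U i = col U (Suc i) \<Longrightarrow>
    Tb i U = (\<lambda>W. (-1) * vb U W + 0 * vb U W)"
  by (auto simp: Tb_def)

lemma Tb_gen: "comp U i = comp U (Suc i) \<Longrightarrow> row U i \<noteq> row U (Suc i) \<Longrightarrow> col U i \<noteq> col U (Suc i) \<Longrightarrow>
    Tb i U = (\<lambda>W. ((qq - 1) / (1 - qq powi (tab_content U i - tab_content U (Suc i)))) * vb U W
       + (1 + (qq - 1) / (1 - qq powi (tab_content U i - tab_content U (Suc i)))) * vb (swapU i U) W)"
  by (auto simp: Tb_def Let_def)

lemma inv_alpha:
  fixes x q :: K assumes "x \<noteq> 0" "x \<noteq> 1"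
  shows "(q-1)/(1 - inverse x) = - x * ((q-1)/(1-x))"
proof -
  have "1 - x \<noteq> 0" "x - 1 \<noteq> 0" using assms by auto
  moreover have "1 - inverse x = (x - 1) / x" using assms by (simp add: field_simps)
  ultimately show ?thesis using assms by (simp add: field_simps)
qed

lemma alpha_mul:
  fixes x q :: K assumes "x \<noteq> 1"
  shows "((q-1)/(1-x)) * (1 - x) = q - 1"
  using assms by simp

lemma alg1:
  fixes x q e a :: K assumes "a * (1 - x) = q - 1"
  shows "a * (x * e) * a + (1 + a) * e * (1 + (- x * a)) = q * e"
proof -
  have "a * (x * e) * a + (1 + a) * e * (1 + (- x * a)) = e * (1 + a * (1 - x))"
    by (simp add: algebra_simps)
  also have "\<dots> = q * e" using assms by simp
  finally show ?thesis .
qed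

lemma alg2:
  fixes x q e a :: K
  shows "a * (x * e) * (1 + a) + (1 + a) * e * (- x * a) = 0"
  by (simp add: algebra_simps)

lemma swap_std:
  assumes U: "U \<in> std_bitab n lam1 m" and i: "1 \<le> i" "Suc i \<le> n"
    and nr: "\<not> (comp U i = comp U (Suc i) \<and> row U i = row U (Suc i))"
    and nc: "\<not> (comp U i = comp U (Suc i) \<and> col U i = col U (Suc i))"
  shows "swapU i U \<in> std_bitab n lam1 m"
proof -
  define \<sigma> where "\<sigma> = (\<lambda>k::nat. if k = i then Suc i else if k = Suc i then i else k)"
  have sw: "\<And>k. swapU i U k = U (\<sigma> k)" by (simp add: swapU_def \<sigma>_def)
  have swc: "swapU i U = U \<circ> \<sigma>" by (simp add: sw fun_eq_iff)
  have sig_in: "\<And>k. k \<in> {1..n} \<Longrightarrow> \<sigma> k \<in> {1..n}" using i by (auto simp: \<sigma>_def)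
  have sig_out: "\<And>k. k \<notin> {1..n} \<Longrightarrow> \<sigma> k = k" using i by (auto simp: \<sigma>_def)
  have sig_inv: "\<And>k. \<sigma> (\<sigma> k) = k" by (simp add: \<sigma>_def)
  have bs: "bij_betw \<sigma> {1..n} {1..n}"
    by (rule bij_betw_byWitness[where f' = \<sigma>]) (use sig_in sig_inv in auto)
  have bU: "bij_betw U {1..n} (bicells lam1 m)" using U unfolding std_bitab_def by simp
  have b: "bij_betw (swapU i U) {1..n} (bicells lam1 m)"
    unfolding swc by (rule bij_betw_trans[OF bs bU])
  have out: "\<forall>k. k \<notin> {1..n} \<longrightarrow> swapU i U k = (0, 0, 0)"
  proof (intro allI impI)
    fix k assume "k \<notin> {1..n}"
    thus "swapU i U k = (0, 0, 0)" using U sig_out[of k] sw[of k] unfolding std_bitab_def by simp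
  qed
  have cs: "\<And>k. comp (swapU i U) k = comp U (\<sigma> k)" "\<And>k. row (swapU i U) k = row U (\<sigma> k)"
    "\<And>k. col (swapU i U) k = col U (\<sigma> k)" by (simp_all add: comp_def row_def col_def sw)
  have ord: "\<And>a b. \<sigma> a < \<sigma> b \<Longrightarrow> \<not> (a = Suc i \<and> b = i) \<Longrightarrow> a < b"
    by (auto simp: \<sigma>_def split: if_splits)
  have r: "\<forall>a\<in>{1..n}. \<forall>b\<in>{1..n}. comp (swapU i U) a = comp (swapU i U) b \<and> row (swapU i U) a = row (swapU i U) b
      \<and> col (swapU i U) a < col (swapU i U) b \<longrightarrow> a < b"
  proof (intro ballI impI)
    fix a b assume ab: "a \<in> {1..n}" "b \<in> {1..n}" and h: "comp (swapU i U) a = comp (swapU i U) b \<and> row (swapU i U) a = row (swapU i U) b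
      \<and> col (swapU i U) a < col (swapU i U) b"
    have "\<sigma> a < \<sigma> b" using std_rowlt[OF U sig_in[OF ab(1)] sig_in[OF ab(2)]] h cs by simp
    moreover have "\<not> (a = Suc i \<and> b = i)"
    proof
      assume "a = Suc i \<and> b = i"
      hence "comp U i = comp U (Suc i) \<and> row U i = row U (Suc i)" using h cs by (simp add: \<sigma>_def)
      thus False using nr by simp
    qed
    ultimately show "a < b" by (rule ord)
  qed
  have c: "\<forall>a\<in>{1..n}. \<forall>b\<in>{1..n}. comp (swapU i U) a = comp (swapU i U) b \<and> col (swapU i U) a = col (swapU i U) b
      \<and> row (swapU i U) a < row (swapU i U) b \<longrightarrow> a < b"
  proof (intro ballI impI)
    fix a b assume ab: "a \<in> {1..n}" "b \<in> {1..n}" and h: "comp (swapU i U) a = comp (swapU i U) b \<and> col (swapU i U) a = col (swapU i U) b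
      \<and> row (swapU i U) a < row (swapU i U) b"
    have "\<sigma> a < \<sigma> b" using std_collt[OF U sig_in[OF ab(1)] sig_in[OF ab(2)]] h cs by simp
    moreover have "\<not> (a = Suc i \<and> b = i)"
    proof
      assume "a = Suc i \<and> b = i"
      hence "comp U i = comp U (Suc i) \<and> col U i = col U (Suc i)" using h cs by (simp add: \<sigma>_def)
      thus False using nc by simp
    qed
    ultimately show "a < b" by (rule ord)
  qed
  show ?thesis unfolding std_bitab_def mem_Collect_eq using b out r c by blast
qed

lemma bicells_eq: "bicells lam1 m = (\<lambda>(r, c). (1::nat, r, c)) ` (SIGMA r:{..<length lam1}. {..<lam1 ! r})
    \<union> (\<lambda>r. (2, r, 0)) ` {..<m}"
  by (auto simp: bicells_def image_iff)

lemma fin_std: "finite (std_bitab n lam1 m)"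
proof -
  let ?S = "std_bitab n lam1 m"
  let ?f = "\<lambda>U::bitab. map U [1..<Suc n]"
  have fB: "finite (bicells lam1 m)" by (simp add: bicells_eq)
  have inj: "inj_on ?f ?S"
  proof (rule inj_onI)
    fix U V assume "U \<in> ?S" "V \<in> ?S" and e: "?f U = ?f V"
    have o: "\<forall>k. k \<notin> {1..n} \<longrightarrow> U k = (0,0,0)" "\<forall>k. k \<notin> {1..n} \<longrightarrow> V k = (0,0,0)"
      using \<open>U \<in> ?S\<close> \<open>V \<in> ?S\<close> unfolding std_bitab_def by auto
    have e2: "\<forall>k\<in>{1..n}. U k = V k" using e by auto
    show "U = V"
    proof
      fix k show "U k = V k"
      proof (cases "k \<in> {1..n}")
        case True thus ?thesis using e2 by blast
      next
        case False thus ?thesis using o by simp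
      qed
    qed
  qed
  have sub: "?f ` ?S \<subseteq> {xs. set xs \<subseteq> bicells lam1 m \<and> length xs \<le> n}"
  proof
    fix f assume "f \<in> ?f ` ?S"
    then obtain U where U: "U \<in> ?S" "f = ?f U" by blast
    have "bij_betw U {1..n} (bicells lam1 m)" using U unfolding std_bitab_def by simp
    hence "\<And>k. k \<in> {1..n} \<Longrightarrow> U k \<in> bicells lam1 m" by (rule bij_betw_apply)
    thus "f \<in> {xs. set xs \<subseteq> bicells lam1 m \<and> length xs \<le> n}" using U(2) by auto
  qed
  have "finite {xs. set xs \<subseteq> bicells lam1 m \<and> length xs \<le> n}" using fB by (rule finite_lists_length_le)
  hence "finite (?f ` ?S)" using sub by (rule finite_subset[rotated])
  thus ?thesis using inj by (rule finite_imageD)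
qed

lemma eps_1: "comp U k = 1 \<Longrightarrow> eps U k = 1" by (simp add: eps_def)
lemma eps_2: "comp U k = 2 \<Longrightarrow> eps U k = 0" by (simp add: eps_def)

lemma main_ind:
  assumes P: "is_partition lam1" and k1: "1 \<le> k"
  shows "k \<le> n \<longrightarrow> (\<forall>U\<in>std_bitab n lam1 m. FF (std_bitab n lam1 m) k (vb U)
           = (\<lambda>W. (eps U k * qq powi (tab_content U k + int k - 1)) * vb U W))"
  using k1
proof (induction k rule: nat_induct_at_least)
  case base
  show ?case
  proof (intro impI ballI)
    assume n: "1 \<le> n"
    fix U assume U: "U \<in> std_bitab n lam1 m"
    have F: "FF (std_bitab n lam1 m) 1 (vb U) = Xb U" unfolding FF_1 by (rule lin_vb[OF fin_std U])
    show "FF (std_bitab n lam1 m) 1 (vb U) = (\<lambda>W. (eps U 1 * qq powi (tab_content U 1 + int 1 - 1)) * vb U W)"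
    proof (cases "comp U 1 = 1")
      case True
      thus ?thesis using F first_content[OF P U n True] by (simp add: Xb_def eps_def)
    next
      case False
      thus ?thesis using F by (simp add: Xb_def eps_def)
    qed
  qed
next
  case (Suc k)
  let ?S = "std_bitab n lam1 m"
  show ?case
  proof (intro impI ballI)
    assume kn: "Suc k \<le> n"
    fix U assume U: "U \<in> ?S"
    have IH: "\<And>U. U \<in> ?S \<Longrightarrow> FF ?S k (vb U) = (\<lambda>W. (eps U k * qq powi (tab_content U k + int k - 1)) * vb U W)"
      using Suc.IH kn by simp
    have FS: "FF ?S (Suc k) (vb U) = lin ?S (Tb k) (FF ?S k (lin ?S (Tb k) (vb U)))"
      by (rule FF_Suc[OF Suc.hyps])
    have kk: "k \<in> {1..n}" "Suc k \<in> {1..n}" using Suc.hyps kn by auto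
    note ck = std_cell[OF U kk(1)] std_cell[OF U kk(2)]
    let ?V = "swapU k U"
    consider (A) "comp U k = 1" "comp U (Suc k) = 2" | (B) "comp U k = 2" "comp U (Suc k) = 1"
      | (C) "comp U k = comp U (Suc k)" "row U k = row U (Suc k)"
      | (D) "comp U k = comp U (Suc k)" "row U k \<noteq> row U (Suc k)" "col U k = col U (Suc k)"
      | (E) "comp U k = comp U (Suc k)" "row U k \<noteq> row U (Suc k)" "col U k \<noteq> col U (Suc k)"
      using ck by (cases "row U k = row U (Suc k)"; cases "col U k = col U (Suc k)"; auto)
    thus "FF ?S (Suc k) (vb U) = (\<lambda>W. (eps U (Suc k) * qq powi (tab_content U (Suc k) + int (Suc k) - 1)) * vb U W)"
    proof cases
      case A
      have VS: "?V \<in> ?S" using swap_std[OF U Suc.hyps kn] A by simp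
      have TV: "Tb k ?V = (\<lambda>W. (qq - 1) * vb ?V W + qq * vb U W)"
        using Tb_21[of ?V k] A by (simp add: swap_facts)
      have r: "FF ?S (Suc k) (vb U) = (\<lambda>W. (0 * (eps U k * qq powi (tab_content U k + int k - 1)) * 0
          + 1 * (eps ?V k * qq powi (tab_content ?V k + int k - 1)) * qq) * vb U W
          + (0 * (eps U k * qq powi (tab_content U k + int k - 1)) * 1
          + 1 * (eps ?V k * qq powi (tab_content ?V k + int k - 1)) * (qq - 1)) * vb ?V W)"
        unfolding FS by (rule step_gen[OF fin_std U VS Tb_12[OF A] TV IH[OF U] IH[OF VS]])
      have "eps ?V k = 0" "eps U (Suc k) = 0" using A by (simp_all add: swap_facts eps_def)
      thus ?thesis using r by simp
    next
      case B
      have VS: "?V \<in> ?S" using swap_std[OF U Suc.hyps kn] B by simp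
      have TV: "Tb k ?V = (\<lambda>W. 0 * vb ?V W + 1 * vb U W)"
        using Tb_12[of ?V k] B by (simp add: swap_facts)
      have r: "FF ?S (Suc k) (vb U) = (\<lambda>W. ((qq - 1) * (eps U k * qq powi (tab_content U k + int k - 1)) * (qq - 1)
          + qq * (eps ?V k * qq powi (tab_content ?V k + int k - 1)) * 1) * vb U W
          + ((qq - 1) * (eps U k * qq powi (tab_content U k + int k - 1)) * qq
          + qq * (eps ?V k * qq powi (tab_content ?V k + int k - 1)) * 0) * vb ?V W)"
        unfolding FS by (rule step_gen[OF fin_std U VS Tb_21[OF B] TV IH[OF U] IH[OF VS]])
      have e: "eps ?V k = 1" "eps U (Suc k) = 1" "eps U k = 0" using B by (simp_all add: swap_facts eps_def)
      have p: "qq * qq powi (tab_content U (Suc k) + int k - 1) = qq powi (tab_content U (Suc k) + int (Suc k) - 1)"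
        using power_int_add_1[of qq "tab_content U (Suc k) + int k - 1"] qq_nz by (simp add: algebra_simps)
      show ?thesis using r e p by (simp add: swap_facts)
    next
      case C
      have sr: "comp U k = 1 \<and> tab_content U (Suc k) = tab_content U k + 1"
        by (rule same_row_content[OF U Suc.hyps kn C])
      have r: "FF ?S (Suc k) (vb U) = (\<lambda>W. (qq * (eps U k * qq powi (tab_content U k + int k - 1)) * qq
          + 0 * (eps U k * qq powi (tab_content U k + int k - 1)) * 0) * vb U W
          + (qq * (eps U k * qq powi (tab_content U k + int k - 1)) * 0
          + 0 * (eps U k * qq powi (tab_content U k + int k - 1)) * qq) * vb U W)"
        unfolding FS by (rule step_gen[OF fin_std U U Tb_row[OF C] Tb_row[OF C] IH[OF U] IH[OF U]])
      have e: "eps U k = 1" "eps U (Suc k) = 1" using sr C by (simp_all add: eps_def)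
      define z where "z = tab_content U k + int k - 1"
      have p: "qq powi (tab_content U (Suc k) + int (Suc k) - 1) = qq * qq * qq powi z"
      proof -
        have "tab_content U (Suc k) + int (Suc k) - 1 = z + 2" using sr by (simp add: z_def)
        moreover have "qq powi (z + 2) = qq powi z * qq powi 2" by (rule power_int_add) (simp add: qq_nz)
        ultimately show ?thesis by (simp add: power2_eq_square)
      qed
      show ?thesis using r e p by (simp add: z_def algebra_simps)
    next
      case D
      have r: "FF ?S (Suc k) (vb U) = (\<lambda>W. ((-1) * (eps U k * qq powi (tab_content U k + int k - 1)) * (-1)
          + 0 * (eps U k * qq powi (tab_content U k + int k - 1)) * 0) * vb U W
          + ((-1) * (eps U k * qq powi (tab_content U k + int k - 1)) * 0
          + 0 * (eps U k * qq powi (tab_content U k + int k - 1)) * (-1)) * vb U W)"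
        unfolding FS by (rule step_gen[OF fin_std U U Tb_col[OF D] Tb_col[OF D] IH[OF U] IH[OF U]])
      show ?thesis
      proof (cases "comp U k = 1")
        case True
        have "tab_content U (Suc k) = tab_content U k - 1"
          using same_col_content[OF P U Suc.hyps kn True] D True by simp
        hence "tab_content U (Suc k) + int (Suc k) - 1 = tab_content U k + int k - 1" by simp
        thus ?thesis using r D True by (simp add: eps_def)
      next
        case False
        thus ?thesis using r D by (simp add: eps_def)
      qed
    next
      case E
      have c1: "comp U k = 1" "comp U (Suc k) = 1" using E ck by auto
      have VS: "?V \<in> ?S" using swap_std[OF U Suc.hyps kn] E by simp
      define a where "a = tab_content U k"
      define b where "b = tab_content U (Suc k)"
      define x where "x = qq powi (a - b)"
      define al where "al = (qq - 1) / (1 - x)"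
      define eV where "eV = qq powi (b + int k - 1)"
      have ab: "a \<noteq> b" unfolding a_def b_def by (rule diag_content[OF U Suc.hyps kn c1 E(2,3)])
      have x1: "x \<noteq> 1" unfolding x_def using ab by (simp add: qq_powi_ne1)
      have x0: "x \<noteq> 0" unfolding x_def using qq_nz by simp
      have T1: "Tb k U = (\<lambda>W. al * vb U W + (1 + al) * vb ?V W)"
        using Tb_gen[OF E] by (simp add: al_def x_def a_def b_def)
      have T2: "Tb k ?V = (\<lambda>W. (- x * al) * vb ?V W + (1 + (- x * al)) * vb U W)"
      proof -
        have "Tb k ?V = (\<lambda>W. ((qq - 1) / (1 - qq powi (b - a))) * vb ?V W
           + (1 + (qq - 1) / (1 - qq powi (b - a))) * vb U W)"
          using Tb_gen[of ?V k] E by (simp add: swap_facts a_def b_def)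
        moreover have "qq powi (b - a) = inverse x"
          unfolding x_def using power_int_minus[of qq "a - b"] by simp
        ultimately show ?thesis using inv_alpha[OF x0 x1, of qq] by (simp add: al_def)
      qed
      have F1: "FF ?S k (vb U) = (\<lambda>W. (x * eV) * vb U W)"
      proof -
        have "qq powi (a + int k - 1) = x * eV"
          unfolding x_def eV_def using power_int_add[of qq "a - b" "b + int k - 1"] qq_nz
          by (simp add: add_diff_eq)
        thus ?thesis using IH[OF U] c1 by (simp add: eps_def a_def)
      qed
      have F2: "FF ?S k (vb ?V) = (\<lambda>W. eV * vb ?V W)"
        using IH[OF VS] c1 by (simp add: eps_def swap_facts eV_def b_def)
      have r: "FF ?S (Suc k) (vb U) = (\<lambda>W. (al * (x * eV) * al + (1 + al) * eV * (1 + (- x * al))) * vb U W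
         + (al * (x * eV) * (1 + al) + (1 + al) * eV * (- x * al)) * vb ?V W)"
        unfolding FS by (rule step_gen[OF fin_std U VS T1 T2 F1 F2])
      have A: "al * (x * eV) * al + (1 + al) * eV * (1 + (- x * al)) = qq * eV"
        by (rule alg1) (unfold al_def, rule alpha_mul[OF x1])
      have B: "al * (x * eV) * (1 + al) + (1 + al) * eV * (- x * al) = 0" by (rule alg2)
      have p: "qq powi (tab_content U (Suc k) + int (Suc k) - 1) = qq * eV"
      proof -
        have "tab_content U (Suc k) + int (Suc k) - 1 = (b + int k - 1) + 1" by (simp add: b_def)
        moreover have "qq powi ((b + int k - 1) + 1) = qq powi (b + int k - 1) * qq"
          using qq_nz by (rule power_int_add_1[OF disjI1])
        ultimately show ?thesis by (simp only: eV_def mult.commute)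
      qed
      show ?thesis using r A B p c1 by (simp add: eps_def)
    qed
  qed
qed

theorem mainTheorem10:
  fixes n m i :: nat and lam1 :: "nat list" and U :: bitab
  assumes "is_partition lam1"
    and "sum_list lam1 + m = n"
    and "U \<in> std_bitab n lam1 m"
    and "1 \<le> i" and "i \<le> n"
  shows "Lop n lam1 m i (vb U) = (\<lambda>W. eps U i * qq powi (tab_content U i) * vb U W)"
proof -
  have F: "FF (std_bitab n lam1 m) i (vb U) = (\<lambda>W. (eps U i * qq powi (tab_content U i + int i - 1)) * vb U W)"
    using main_ind[OF assms(1) assms(4)] assms(3,5) by blast
  have p: "qq powi (1 - int i) * qq powi (tab_content U i + int i - 1) = qq powi (tab_content U i)"
    using power_int_add[of qq "1 - int i" "tab_content U i + int i - 1"] qq_nz by simp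
  show ?thesis unfolding Lop_eq F
  proof
    fix W
    show "qq powi (1 - int i) * (eps U i * qq powi (tab_content U i + int i - 1) * vb U W)
        = eps U i * qq powi (tab_content U i) * vb U W"
      using p by (simp add: algebra_simps)
  qed
qed

end
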